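(* Let $G$ be an infinite group in which every non-abelian subgroup $H$ satisfies $C_G(H)\le H$. Then the Fitting subgroup of $G$ is abelian.
   Context: The Fitting subgroup of $G$ is the subgroup generated by all nilpotent normal subgroups of $G$. $C_G(H)$ denotes the centralizer of $H$ in $G$. *)

theory Defs
  imports "HOL-Algebra.Algebra"
begin

definition centralizer :: "('a, 'b) monoid_scheme \<Rightarrow> 'a set \<Rightarrow> 'a set" where
  "centralizer G H = {g \<in> carrier G. \<forall>h \<in> H. g \<otimes>\<^bsub>G\<^esub> h = h \<otimes>\<^bsub>G\<^esub> g}"

definition commutator :: "('a, 'b) monoid_scheme \<Rightarrow> 'a \<Rightarrow> 'a \<Rightarrow> 'a" where
  "commutator G x y = inv\<^bsub>G\<^esub> x \<otimes>\<^bsub>G\<^esub> inv\<^bsub>G\<^esub> y \<otimes>\<^bsub>G\<^esub> x \<otimes>\<^bsub>G\<^esub> y"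

text \<open>Lower central series: gamma_1 = G (index 0 here), gamma_{i+1} = [gamma_i, G].\<close>
fun lower_central :: "('a, 'b) monoid_scheme \<Rightarrow> nat \<Rightarrow> 'a set" where
  "lower_central G 0 = carrier G"
| "lower_central G (Suc n) =
     generate G {commutator G x y | x y. x \<in> lower_central G n \<and> y \<in> carrier G}"

definition nilpotent_group :: "('a, 'b) monoid_scheme \<Rightarrow> bool" where
  "nilpotent_group G \<longleftrightarrow> group G \<and> (\<exists>n. lower_central G n = {\<one>\<^bsub>G\<^esub>})"

definition fitting_subgroup :: "('a, 'b) monoid_scheme \<Rightarrow> 'a set" where
  "fitting_subgroup G =
     generate G (\<Union>{N. N \<lhd> G \<and> nilpotent_group (G\<lparr>carrier := N\<rparr>)})"

end

theory Submission imports Defs begin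

fun ucs :: "('a, 'b) monoid_scheme \<Rightarrow> 'a set \<Rightarrow> nat \<Rightarrow> 'a set" where
  "ucs G N 0 = {\<one>\<^bsub>G\<^esub>}"
| "ucs G N (Suc j) = {t \<in> N. \<forall>b\<in>N. commutator G t b \<in> ucs G N j}"

context group begin

lemma cancel_l1: "g \<in> carrier G \<Longrightarrow> w \<in> carrier G \<Longrightarrow> g \<otimes> (inv g \<otimes> w) = w"
  by (simp add: m_assoc[symmetric])
lemma cancel_l2: "g \<in> carrier G \<Longrightarrow> w \<in> carrier G \<Longrightarrow> inv g \<otimes> (g \<otimes> w) = w"
  by (simp add: m_assoc[symmetric])

lemma cent_subgroup:
  assumes "a \<in> carrier G"
  shows "subgroup {g \<in> carrier G. g \<otimes> a = a \<otimes> g} G"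
proof (rule subgroupI)
  show "{g \<in> carrier G. g \<otimes> a = a \<otimes> g} \<subseteq> carrier G" by auto
  show "{g \<in> carrier G. g \<otimes> a = a \<otimes> g} \<noteq> {}" using assms by auto
next
  fix g assume g: "g \<in> {g \<in> carrier G. g \<otimes> a = a \<otimes> g}"
  hence gc: "g \<in> carrier G" and e: "g \<otimes> a = a \<otimes> g" by auto
  have "inv g \<otimes> a = inv g \<otimes> a \<otimes> g \<otimes> inv g" using gc assms by (simp add: m_assoc)
  also have "\<dots> = inv g \<otimes> (g \<otimes> a) \<otimes> inv g" using gc assms e by (simp add: m_assoc)
  also have "\<dots> = a \<otimes> inv g" using gc assms by (simp add: m_assoc[symmetric])
  finally show "inv g \<in> {g \<in> carrier G. g \<otimes> a = a \<otimes> g}" using gc by auto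
next
  fix g h assume g: "g \<in> {g \<in> carrier G. g \<otimes> a = a \<otimes> g}" and h: "h \<in> {g \<in> carrier G. g \<otimes> a = a \<otimes> g}"
  hence gc: "g \<in> carrier G" "h \<in> carrier G" and e: "g \<otimes> a = a \<otimes> g" "h \<otimes> a = a \<otimes> h" by auto
  have "g \<otimes> h \<otimes> a = g \<otimes> (a \<otimes> h)" using gc assms e by (simp add: m_assoc)
  also have "\<dots> = a \<otimes> (g \<otimes> h)" using gc assms e by (simp add: m_assoc[symmetric])
  finally show "g \<otimes> h \<in> {g \<in> carrier G. g \<otimes> a = a \<otimes> g}" using gc by auto
qed

lemma generate_comm:
  assumes "S \<subseteq> carrier G" "a \<in> carrier G" "\<And>s. s \<in> S \<Longrightarrow> s \<otimes> a = a \<otimes> s"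
    and "h \<in> generate G S"
  shows "h \<otimes> a = a \<otimes> h"
proof -
  have "generate G S \<subseteq> {g \<in> carrier G. g \<otimes> a = a \<otimes> g}"
    by (rule generate_subgroup_incl[OF _ cent_subgroup[OF assms(2)]]) (use assms in auto)
  thus ?thesis using assms(4) by auto
qed

lemma comm_int_pows:
  assumes "x \<in> carrier G" "y \<in> carrier G" "x \<otimes> y = y \<otimes> x"
  shows "x [^] (i::int) \<otimes> y [^] (j::int) = y [^] j \<otimes> x [^] i"
proof -
  have "y [^] j \<in> {g \<in> carrier G. g \<otimes> x = x \<otimes> g}"
    using subgroup_int_pow_closed[OF cent_subgroup[OF assms(1)]] assms by auto
  hence 1: "y [^] j \<otimes> x = x \<otimes> y [^] j" by auto
  have "x [^] i \<in> {g \<in> carrier G. g \<otimes> y [^] j = y [^] j \<otimes> g}"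
    using subgroup_int_pow_closed[OF cent_subgroup[of "y [^] j"]] assms 1 by auto
  thus ?thesis by auto
qed

lemma conj_pow:
  assumes "g \<in> carrier G" "x \<in> carrier G"
  shows "(inv g \<otimes> x \<otimes> g) [^] (i::int) = inv g \<otimes> x [^] i \<otimes> g"
proof -
  have nat: "(inv g \<otimes> x \<otimes> g) [^] (n::nat) = inv g \<otimes> x [^] n \<otimes> g" for n
  proof (induction n)
    case 0 then show ?case using assms by simp
  next
    case (Suc n)
    have "(inv g \<otimes> x \<otimes> g) [^] Suc n = (inv g \<otimes> x [^] n \<otimes> g) \<otimes> (inv g \<otimes> x \<otimes> g)"
      using Suc by simp
    also have "\<dots> = inv g \<otimes> (x [^] n \<otimes> (g \<otimes> inv g) \<otimes> x) \<otimes> g" using assms by (simp add: m_assoc cancel_l1)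
    also have "\<dots> = inv g \<otimes> x [^] Suc n \<otimes> g" using assms by simp
    finally show ?case .
  qed
  show ?thesis
  proof (cases "i \<ge> 0")
    case True
    then obtain n where i: "i = int n" using nonneg_int_cases by blast
    show ?thesis unfolding i int_pow_int by (rule nat)
  next
    case False
    define n where "n = nat (- i)"
    have n: "i = - int n" using False n_def by simp
    have "(inv g \<otimes> x \<otimes> g) [^] i = inv (inv g \<otimes> x [^] n \<otimes> g)"
      using n nat assms int_pow_neg_int by simp
    also have "\<dots> = inv g \<otimes> inv (x [^] n) \<otimes> g" using assms by (simp add: inv_mult_group m_assoc)
    also have "\<dots> = inv g \<otimes> x [^] i \<otimes> g" using n assms int_pow_neg_int by simp
    finally show ?thesis .
  qed
qed

lemma conj_eq_iff:
  assumes "g \<in> carrier G" "a \<in> carrier G" "b \<in> carrier G"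
  shows "(inv g \<otimes> a \<otimes> g = b) \<longleftrightarrow> (a \<otimes> g = g \<otimes> b)"
proof
  assume "inv g \<otimes> a \<otimes> g = b"
  hence "g \<otimes> (inv g \<otimes> a \<otimes> g) = g \<otimes> b" by simp
  thus "a \<otimes> g = g \<otimes> b" using assms by (simp add: m_assoc[symmetric])
next
  assume "a \<otimes> g = g \<otimes> b"
  hence "inv g \<otimes> (a \<otimes> g) = inv g \<otimes> (g \<otimes> b)" by simp
  thus "inv g \<otimes> a \<otimes> g = b" using assms by (simp add: m_assoc[symmetric])
qed

end

context group begin

lemma NC:
  assumes hyp: "\<forall>H. subgroup H G \<and> \<not> comm_group (G\<lparr>carrier := H\<rparr>) \<longrightarrow> centralizer G H \<subseteq> H"
    and S: "S \<subseteq> carrier G" and s: "s1 \<in> generate G S" "s2 \<in> generate G S" "s1 \<otimes> s2 \<noteq> s2 \<otimes> s1"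
    and g: "g \<in> carrier G" "\<And>s. s \<in> S \<Longrightarrow> s \<otimes> g = g \<otimes> s"
  shows "g \<in> generate G S"
proof -
  have sg: "subgroup (generate G S) G" using generate_is_subgroup[OF S] .
  have nc: "\<not> comm_group (G\<lparr>carrier := generate G S\<rparr>)"
  proof
    assume "comm_group (G\<lparr>carrier := generate G S\<rparr>)"
    from comm_groupE(4)[OF this, of s1 s2] s have "s1 \<otimes> s2 = s2 \<otimes> s1" by simp
    with s(3) show False by simp
  qed
  have "g \<in> centralizer G (generate G S)"
    unfolding centralizer_def using g generate_comm[OF S g(1)] by auto
  then show ?thesis using hyp sg nc by blast
qed

end

locale c2 = group G for G (structure) +
  fixes x y z
  assumes xc: "x \<in> carrier G" and yc: "y \<in> carrier G" and zc: "z \<in> carrier G"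
    and xy: "x \<otimes> y = y \<otimes> x \<otimes> z" and zx: "z \<otimes> x = x \<otimes> z" and zy: "z \<otimes> y = y \<otimes> z"
begin

definition P :: "int \<Rightarrow> int \<Rightarrow> int \<Rightarrow> 'a" where
  "P i j k = x [^] i \<otimes> y [^] j \<otimes> z [^] k"

lemma P_closed [simp]: "P i j k \<in> carrier G"
  unfolding P_def using xc yc zc by simp

lemma zpow_comm:
  assumes "w \<in> carrier G" "w \<otimes> z = z \<otimes> w"
  shows "w \<otimes> z [^] (k::int) = z [^] k \<otimes> w"
  using comm_int_pows[OF assms(1) zc assms(2), of 1 k] assms(1) by simp

lemma xpow_z: "x [^] (i::int) \<otimes> z = z \<otimes> x [^] i"
  using comm_int_pows[OF xc zc zx[symmetric], of i 1] xc zc by simp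
lemma ypow_z: "y [^] (i::int) \<otimes> z = z \<otimes> y [^] i"
  using comm_int_pows[OF yc zc zy[symmetric], of i 1] yc zc by simp

lemma comm_pow:
  "y [^] (q::int) \<otimes> x [^] (p::int) = x [^] p \<otimes> y [^] q \<otimes> z [^] (-(p*q))"
proof -
  have s1: "inv y \<otimes> x \<otimes> y = x \<otimes> z"
    using conj_eq_iff[OF yc xc] xc yc zc xy by (simp add: m_assoc)
  have s2: "inv y \<otimes> x [^] p \<otimes> y = x [^] p \<otimes> z [^] p"
    using conj_pow[OF yc xc, of p] s1 int_pow_mult_distrib[OF zx[symmetric] xc zc] by simp
  have s2': "x [^] p \<otimes> y = y \<otimes> (x [^] p \<otimes> z [^] p)"
    using s2 conj_eq_iff[OF yc, of "x [^] p" "x [^] p \<otimes> z [^] p"] xc zc by simp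
  have zz: "z [^] p \<otimes> z [^] (-p) = \<one>"
    using int_pow_mult[OF zc, of p "-p"] by simp
  have "y \<otimes> x [^] p = y \<otimes> x [^] p \<otimes> (z [^] p \<otimes> z [^] (-p))"
    using zz xc yc zc by simp
  also have "\<dots> = (x [^] p \<otimes> y) \<otimes> z [^] (-p)"
    using s2' xc yc zc by (simp add: m_assoc)
  finally have s3': "y \<otimes> x [^] p = x [^] p \<otimes> (y \<otimes> z [^] (-p))"
    using xc yc zc by (simp add: m_assoc)
  have s3: "inv (x [^] p) \<otimes> y \<otimes> x [^] p = y \<otimes> z [^] (-p)"
    using s3' conj_eq_iff[of "x [^] p" y "y \<otimes> z [^] (-p)"] xc yc zc by simp
  have yz: "y \<otimes> z [^] (-p) = z [^] (-p) \<otimes> y"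
    using zpow_comm[OF yc zy[symmetric]] .
  have s4: "inv (x [^] p) \<otimes> y [^] q \<otimes> x [^] p = y [^] q \<otimes> z [^] (-p * q)"
    using conj_pow[of "x [^] p" y q] s3 int_pow_mult_distrib[OF yz yc, of q] xc yc zc
    by (simp add: int_pow_pow)
  have "y [^] q \<otimes> x [^] p = x [^] p \<otimes> (y [^] q \<otimes> z [^] (-p * q))"
    using s4 conj_eq_iff[of "x [^] p" "y [^] q" "y [^] q \<otimes> z [^] (-p * q)"] xc yc zc by simp
  thus ?thesis using xc yc zc by (simp add: m_assoc)
qed

lemma Mul: "P i j k \<otimes> P i' j' k' = P (i+i') (j+j') (k+k'-j*i')"
proof -
  let ?X = "x [^] i" and ?Y = "y [^] j" and ?Z = "z [^] k"
  let ?X' = "x [^] i'" and ?Y' = "y [^] j'" and ?Z' = "z [^] k'"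
  have c: "?X \<in> carrier G" "?Y \<in> carrier G" "?Z \<in> carrier G" "?X' \<in> carrier G" "?Y' \<in> carrier G" "?Z' \<in> carrier G"
    using xc yc zc by auto
  have "?X' \<otimes> ?Y' \<otimes> z = ?X' \<otimes> (z \<otimes> ?Y')" using ypow_z[of j'] c zc by (simp add: m_assoc)
  also have "\<dots> = (?X' \<otimes> z) \<otimes> ?Y'" using c zc by (simp add: m_assoc)
  also have "\<dots> = z \<otimes> (?X' \<otimes> ?Y')" using xpow_z[of i'] c zc by (simp add: m_assoc)
  finally have w: "?X' \<otimes> ?Y' \<otimes> z = z \<otimes> (?X' \<otimes> ?Y')" .
  have zq: "?Z \<otimes> (?X' \<otimes> ?Y') = (?X' \<otimes> ?Y') \<otimes> ?Z"
    using zpow_comm[OF _ w, of k] c by simp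
  have yz: "z [^] (-(i'*j)) \<otimes> ?Y' = ?Y' \<otimes> z [^] (-(i'*j))"
    using zpow_comm[OF c(5) ypow_z[of j']] by simp
  have "P i j k \<otimes> P i' j' k' = ?X \<otimes> ?Y \<otimes> (?Z \<otimes> (?X' \<otimes> ?Y')) \<otimes> ?Z'"
    unfolding P_def using c by (simp add: m_assoc)
  also have "\<dots> = ?X \<otimes> (?Y \<otimes> ?X') \<otimes> ?Y' \<otimes> (?Z \<otimes> ?Z')"
    unfolding zq using c by (simp add: m_assoc)
  also have "\<dots> = ?X \<otimes> ?X' \<otimes> ?Y \<otimes> (z [^] (-(i'*j)) \<otimes> ?Y') \<otimes> (?Z \<otimes> ?Z')"
    unfolding comm_pow using c zc by (simp add: m_assoc)
  also have "\<dots> = (?X \<otimes> ?X') \<otimes> (?Y \<otimes> ?Y') \<otimes> (z [^] (-(i'*j)) \<otimes> (?Z \<otimes> ?Z'))"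
    unfolding yz using c zc by (simp add: m_assoc)
  also have "\<dots> = P (i+i') (j+j') (k+k'-j*i')"
    unfolding P_def using xc yc zc
    by (simp add: int_pow_mult[symmetric] algebra_simps)
  finally show ?thesis .
qed


lemma P_simps: "P 0 0 0 = \<one>" "P i 0 0 = x [^] i" "P 0 j 0 = y [^] j" "P 0 0 k = z [^] k"
  "P 1 0 0 = x" "P 0 1 0 = y" "P 0 0 1 = z"
  unfolding P_def using xc yc zc by auto

lemma P_cancel:
  assumes "P i j k = P i' j' k'" "i = i'" "j = j'"
  shows "z [^] (k - k') = \<one>"
proof -
  have "x [^] i \<otimes> y [^] j \<otimes> z [^] k = x [^] i \<otimes> y [^] j \<otimes> z [^] k'"
    using assms unfolding P_def by simp
  hence "z [^] k = z [^] k'" using xc yc zc by (simp add: m_assoc)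
  thus ?thesis using int_pow_diff[OF zc, of k k'] zc by simp
qed

lemma Kab:
  assumes "g \<in> generate G {x [^] (a::int), y [^] (b::int)}"
  shows "\<exists>i j k. g = P (a*i) (b*j) (a*b*k)"
  using assms
proof (induction rule: generate.induct)
  case one
  then show ?case by (rule exI[of _ 0], rule exI[of _ 0], rule exI[of _ 0]) (simp add: P_simps)
next
  case (incl h)
  then show ?case
  proof
    assume "h = x [^] a" thus ?thesis
      by (intro exI[of _ 1] exI[of _ 0]) (simp add: P_simps)
  next
    assume "h \<in> {y [^] b}" thus ?thesis
      by (intro exI[of _ 1] exI[of _ 0]) (simp add: P_simps)
  qed
next
  case (inv h)
  then show ?case
  proof
    assume "h = x [^] a" thus ?thesis
      using int_pow_neg[OF xc, of a] by (intro exI[of _ "-1"] exI[of _ 0]) (simp add: P_simps)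
  next
    assume "h \<in> {y [^] b}" thus ?thesis
      using int_pow_neg[OF yc, of b] by (intro exI[of _ "-1"] exI[of _ 0]) (simp add: P_simps)
  qed
next
  case (eng h1 h2)
  then obtain i j k i' j' k' where h: "h1 = P (a*i) (b*j) (a*b*k)" "h2 = P (a*i') (b*j') (a*b*k')"
    by blast
  have "h1 \<otimes> h2 = P (a*(i+i')) (b*(j+j')) (a*b*(k+k'-j*i'))"
    unfolding h Mul by (simp add: algebra_simps)
  then show ?case by blast
qed

definition Tm :: "int \<Rightarrow> int \<Rightarrow> bool" where
  "Tm i j \<longleftrightarrow> (\<exists>k. P i j k = \<one>)"

lemma T_add: assumes "Tm i j" "Tm i' j'" shows "Tm (i+i') (j+j')"
proof -
  obtain k k' where k: "P i j k = \<one>" "P i' j' k' = \<one>" using assms Tm_def by blast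
  have "P (i+i') (j+j') (k+k'-j*i') = P i j k \<otimes> P i' j' k'" using Mul by simp
  also have "\<dots> = \<one>" using k by simp
  finally show ?thesis unfolding Tm_def by blast
qed

lemma T_neg: assumes "Tm i j" shows "Tm (-i) (-j)"
proof -
  obtain k where k: "P i j k = \<one>" using assms Tm_def by blast
  have "P i j k \<otimes> P (-i) (-j) (-k-i*j) = P 0 0 0"
    unfolding Mul by (simp add: algebra_simps)
  hence "P (-i) (-j) (-k-i*j) = \<one>" using k by (simp add: P_simps)
  thus ?thesis unfolding Tm_def by blast
qed

lemma T_zero: "Tm 0 0"
  unfolding Tm_def using P_simps(1) by blast

lemma T_smult_nat: "Tm i j \<Longrightarrow> Tm (int n * i) (int n * j)"
proof (induction n)
  case 0 then show ?case using T_zero by simp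
next
  case (Suc n)
  then have "Tm (int n * i + i) (int n * j + j)" using T_add by blast
  then show ?case by (simp add: algebra_simps)
qed

lemma T_smult: assumes "Tm i j" shows "Tm (n * i) (n * j)"
proof (cases "n \<ge> 0")
  case True
  then obtain k where "n = int k" using nonneg_int_cases by blast
  then show ?thesis using T_smult_nat assms by blast
next
  case False
  define k where "k = nat (- n)"
  have k: "n = - int k" using False k_def by simp
  have "Tm (- (int k * i)) (- (int k * j))" using T_neg T_smult_nat assms by blast
  then show ?thesis using k by simp
qed

lemma T_lin: "Tm p q \<Longrightarrow> Tm r s \<Longrightarrow> Tm (a*p + b*r) (a*q + b*s)"
  using T_add T_smult by blast

lemma P_mod:
  assumes "x [^] (N::int) = \<one>" "y [^] N = \<one>" "z [^] (M::int) = \<one>"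
  shows "P i j k = P (i mod N) (j mod N) (k mod M)"
proof -
  have pm: "a [^] (n::int) = a [^] (n mod L)" if "a \<in> carrier G" "a [^] L = \<one>" for a n L
  proof -
    have 1: "a [^] (L * (n div L)) = \<one>" using int_pow_pow[OF that(1), of L "n div L"] that by simp
    have "a [^] n = a [^] (L * (n div L) + n mod L)" by simp
    also have "\<dots> = a [^] (L * (n div L)) \<otimes> a [^] (n mod L)"
      by (rule int_pow_mult[OF that(1)])
    also have "\<dots> = a [^] (n mod L)" using 1 that by simp
    finally show ?thesis .
  qed
  show ?thesis unfolding P_def using pm[OF xc assms(1)] pm[OF yc assms(2)] pm[OF zc assms(3)] by metis
qed


lemma pair_cent:
  assumes hyp: "\<forall>H. subgroup H G \<and> \<not> comm_group (G\<lparr>carrier := H\<rparr>) \<longrightarrow> centralizer G H \<subseteq> H"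
    and znt: "z \<noteq> \<one>"
    and g: "g \<in> carrier G" "g \<otimes> x = x \<otimes> g" "g \<otimes> y = y \<otimes> g"
  shows "g \<in> generate G {x, y}"
proof (rule NC[OF hyp])
  show "{x, y} \<subseteq> carrier G" using xc yc by auto
  show "x \<in> generate G {x, y}" "y \<in> generate G {x, y}" by (auto intro: generate.incl)
  show "x \<otimes> y \<noteq> y \<otimes> x"
  proof
    assume "x \<otimes> y = y \<otimes> x"
    hence "y \<otimes> x \<otimes> z = y \<otimes> x" using xy by simp
    thus False using znt xc yc zc by simp
  qed
  show "g \<in> carrier G" by fact
  show "\<And>s. s \<in> {x, y} \<Longrightarrow> s \<otimes> g = g \<otimes> s" using g by auto
qed

lemma abs_pow_one:
  assumes "a \<in> carrier G" "a [^] (n::int) = \<one>" shows "a [^] \<bar>n\<bar> = \<one>"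
proof (cases "n \<ge> 0")
  case True then show ?thesis using assms by simp
next
  case False
  then have "\<bar>n\<bar> = - n" by simp
  then show ?thesis using assms int_pow_neg[OF assms(1), of n] by simp
qed

lemma caseA:
  assumes hyp: "\<forall>H. subgroup H G \<and> \<not> comm_group (G\<lparr>carrier := H\<rparr>) \<longrightarrow> centralizer G H \<subseteq> H"
    and noord: "\<And>m::nat. m > 0 \<Longrightarrow> z [^] m \<noteq> \<one>"
  shows False
proof -
  have z0: "k = 0" if "z [^] (k::int) = \<one>" for k
  proof (rule ccontr)
    assume k: "k \<noteq> 0"
    have "z [^] nat \<bar>k\<bar> = \<one>"
      using abs_pow_one[OF zc that] int_pow_int[of G z "nat \<bar>k\<bar>"] by simp
    thus False using noord[of "nat \<bar>k\<bar>"] k by simp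
  qed
  have zs: "z \<noteq> \<one>" using noord[of 1] zc by auto
  let ?S = "{x [^] (2::int), y [^] (2::int)}"
  have "z \<in> generate G ?S"
  proof (rule NC[OF hyp])
    show "?S \<subseteq> carrier G" using xc yc by auto
    show "x [^] (2::int) \<in> generate G ?S" "y [^] (2::int) \<in> generate G ?S" by (auto intro: generate.incl)
    show "x [^] (2::int) \<otimes> y [^] (2::int) \<noteq> y [^] (2::int) \<otimes> x [^] (2::int)"
    proof
      assume "x [^] (2::int) \<otimes> y [^] (2::int) = y [^] (2::int) \<otimes> x [^] (2::int)"
      hence "P 2 0 0 \<otimes> P 0 2 0 = P 0 2 0 \<otimes> P 2 0 0" by (simp add: P_simps)
      hence "P 2 2 0 = P 2 2 (-4)" unfolding Mul by simp
      from z0[OF P_cancel[OF this]] show False by simp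
    qed
    show "z \<in> carrier G" by (rule zc)
    show "\<And>s. s \<in> ?S \<Longrightarrow> s \<otimes> z = z \<otimes> s" using xpow_z ypow_z by auto
  qed
  then obtain i j k where zP: "z = P (2*i) (2*j) (2*2*k)" using Kab by blast
  have "P (2*i) (2*j) (2*2*k) \<otimes> P 1 0 0 = P 1 0 0 \<otimes> P (2*i) (2*j) (2*2*k)"
    using zx unfolding P_simps(5) zP[symmetric] .
  hence "P (2*i+1) (2*j) (2*2*k - 2*j) = P (1+2*i) (2*j) (2*2*k)" unfolding Mul by simp
  from z0[OF P_cancel[OF this]] have j0: "j = 0" by simp
  have "P (2*i) (2*j) (2*2*k) \<otimes> P 0 1 0 = P 0 1 0 \<otimes> P (2*i) (2*j) (2*2*k)"
    using zy unfolding P_simps(6) zP[symmetric] .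
  hence "P (2*i) (2*j+1) (2*2*k) = P (2*i) (1+2*j) (2*2*k - 2*i)" unfolding Mul by simp
  from z0[OF P_cancel[OF this]] have i0: "i = 0" by simp
  have "P 0 0 1 = P (2*i) (2*j) (2*2*k)" using P_simps(7) zP by simp
  hence "P 0 0 1 = P 0 0 (2*2*k)" using i0 j0 by simp
  from z0[OF P_cancel[OF this]] show False by presburger
qed


lemma D_nonzero: "(e::int) \<ge> 2 \<Longrightarrow> e * t + 1 \<noteq> 0"
proof
  assume e: "e \<ge> 2" and h: "e * t + 1 = 0"
  show False
  proof (cases "t = 0")
    case True then show ?thesis using h by simp
  next
    case False
    have "\<bar>e * t\<bar> = \<bar>e\<bar> * \<bar>t\<bar>" by (simp add: abs_mult)
    also have "\<dots> \<ge> 2 * 1" using e False by (intro mult_mono) auto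
    finally show ?thesis using h by simp
  qed
qed

lemma caseB:
  assumes hyp: "\<forall>H. subgroup H G \<and> \<not> comm_group (G\<lparr>carrier := H\<rparr>) \<longrightarrow> centralizer G H \<subseteq> H"
    and znt: "z \<noteq> \<one>" and m: "m > 0" "z [^] (m::nat) = \<one>"
  shows "finite (generate G {x, y})"
proof -
  have zm: "z [^] (int m * t) = \<one>" for t
    using int_pow_pow[OF zc, of "int m" t, symmetric] m(2) int_pow_int[of G z m] by simp
  have Pz: "P i j (k + int m * t) = P i j k" for i j k t
    unfolding P_def using int_pow_mult[OF zc, of k "int m * t"] zm xc yc zc by simp
  define e where "e = int m + 1"
  have e2: "e \<ge> 2" using m e_def by simp
  let ?S = "{x [^] e, y [^] e}"
  have Sc: "?S \<subseteq> carrier G" using xc yc by auto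
  have ge: "x [^] e \<in> generate G ?S" "y [^] e \<in> generate G ?S" by (auto intro: generate.incl)
  have ncomm: "x [^] e \<otimes> y [^] e \<noteq> y [^] e \<otimes> x [^] e"
  proof
    assume "x [^] e \<otimes> y [^] e = y [^] e \<otimes> x [^] e"
    hence "P e 0 0 \<otimes> P 0 e 0 = P 0 e 0 \<otimes> P e 0 0" by (simp add: P_simps)
    hence "P e e 0 = P e e (-(e*e))" unfolding Mul by simp
    hence "z [^] (0 - (-(e*e))) = \<one>" by (rule P_cancel) auto
    moreover have "0 - (-(e*e)) = 1 + int m * (int m + 2)" unfolding e_def by (simp add: algebra_simps)
    ultimately have "P 0 0 (1 + int m * (int m + 2)) = \<one>" by (simp add: P_simps)
    hence "z = \<one>" using Pz[of 0 0 1 "int m + 2"] zc by (simp add: P_simps)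
    thus False using znt by simp
  qed
  have xm: "x [^] (int m) \<in> generate G ?S"
  proof (rule NC[OF hyp Sc ge ncomm])
    show "x [^] (int m) \<in> carrier G" using xc by simp
    fix s assume "s \<in> ?S"
    then show "s \<otimes> x [^] (int m) = x [^] (int m) \<otimes> s"
    proof
      assume s: "s = x [^] e"
      have "P e 0 0 \<otimes> P (int m) 0 0 = P (int m) 0 0 \<otimes> P e 0 0" unfolding Mul by (simp add: add.commute)
      thus ?thesis using s by (simp add: P_simps)
    next
      assume "s \<in> {y [^] e}" hence s: "s = y [^] e" by simp
      have "P 0 e 0 \<otimes> P (int m) 0 0 = P (int m) e (0 + int m * (-e))" unfolding Mul by (simp add: algebra_simps)
      also have "\<dots> = P (int m) 0 0 \<otimes> P 0 e 0" unfolding Pz Mul by simp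
      finally show ?thesis using s by (simp add: P_simps)
    qed
  qed
  have ym: "y [^] (int m) \<in> generate G ?S"
  proof (rule NC[OF hyp Sc ge ncomm])
    show "y [^] (int m) \<in> carrier G" using yc by simp
    fix s assume "s \<in> ?S"
    then show "s \<otimes> y [^] (int m) = y [^] (int m) \<otimes> s"
    proof
      assume s: "s = x [^] e"
      have "P e 0 0 \<otimes> P 0 (int m) 0 = P e (int m) 0" unfolding Mul by simp
      also have "\<dots> = P e (int m) (0 + int m * (-e))" unfolding Pz ..
      also have "\<dots> = P 0 (int m) 0 \<otimes> P e 0 0" unfolding Mul by (simp add: algebra_simps)
      finally show ?thesis using s by (simp add: P_simps)
    next
      assume "s \<in> {y [^] e}" hence s: "s = y [^] e" by simp
      have "P 0 e 0 \<otimes> P 0 (int m) 0 = P 0 (int m) 0 \<otimes> P 0 e 0" unfolding Mul by (simp add: add.commute)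
      thus ?thesis using s by (simp add: P_simps)
    qed
  qed
  obtain i1 j1 k1 where h1: "x [^] (int m) = P (e*i1) (e*j1) (e*e*k1)" using Kab[OF xm] by blast
  obtain i2 j2 k2 where h2: "y [^] (int m) = P (e*i2) (e*j2) (e*e*k2)" using Kab[OF ym] by blast
  have T1: "Tm (- int m + e*i1) (e*j1)"
  proof -
    have "P (- int m) 0 0 \<otimes> P (int m) 0 0 = P 0 0 0" unfolding Mul by simp
    hence "P (- int m) 0 0 \<otimes> P (e*i1) (e*j1) (e*e*k1) = \<one>" using h1 by (simp add: P_simps)
    hence "P (- int m + e*i1) (e*j1) (e*e*k1) = \<one>" unfolding Mul by simp
    thus ?thesis unfolding Tm_def by blast
  qed
  have T2: "Tm (e*i2) (- int m + e*j2)"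
  proof -
    have "P 0 (- int m) 0 \<otimes> P 0 (int m) 0 = P 0 0 0" unfolding Mul by simp
    hence "P 0 (- int m) 0 \<otimes> P (e*i2) (e*j2) (e*e*k2) = \<one>" using h2 by (simp add: P_simps)
    hence "P (e*i2) (- int m + e*j2) (e*e*k2 + int m * (e*i2)) = \<one>" unfolding Mul by simp
    thus ?thesis unfolding Tm_def by blast
  qed
  define p q r s where "p = - int m + e*i1" "q = e*j1" "r = e*i2" "s = - int m + e*j2"
  define D where "D = p * s - q * r"
  have TD1: "Tm D 0" using T_lin[OF T1 T2, of s "-q"] unfolding D_def p_q_r_s_def by (simp add: algebra_simps)
  have TD2: "Tm 0 D" using T_lin[OF T1 T2, of "-r" p] unfolding D_def p_q_r_s_def by (simp add: algebra_simps)
  have "D = e * (e*i1*j2 - int m*i1 - int m*j2 - e*j1*i2 + int m - 1) + 1"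
    unfolding D_def p_q_r_s_def e_def by (simp add: algebra_simps power2_eq_square)
  hence Dnz: "D \<noteq> 0" using D_nonzero[OF e2] by simp
  have ord1: "a [^] (D * int m) = \<one>" if a: "a \<in> carrier G" and k: "a [^] D \<otimes> z [^] k = \<one>" for a and k :: int
  proof -
    have "inv (z [^] k) = a [^] D" by (rule inv_equality) (use k a zc in auto)
    hence "a [^] D = inv (z [^] k)" by simp
    hence "a [^] (D * int m) = inv (z [^] k) [^] (int m)" using int_pow_pow[OF a] by metis
    also have "\<dots> = inv (z [^] (int m * k))" using zc by (simp add: int_pow_inv int_pow_pow mult.commute)
    also have "\<dots> = \<one>" using zm by simp
    finally show ?thesis .
  qed
  obtain kx where "P D 0 kx = \<one>" using TD1 Tm_def by blast
  hence "x [^] D \<otimes> z [^] kx = \<one>" unfolding P_def using xc by simp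
  hence xo: "x [^] \<bar>D * int m\<bar> = \<one>" using ord1 xc abs_pow_one by blast
  obtain ky where "P 0 D ky = \<one>" using TD2 Tm_def by blast
  hence "y [^] D \<otimes> z [^] ky = \<one>" unfolding P_def using yc by simp
  hence yo: "y [^] \<bar>D * int m\<bar> = \<one>" using ord1 yc abs_pow_one by blast
  define N where "N = \<bar>D * int m\<bar>"
  have Npos: "N > 0" using Dnz m N_def by simp
  have zo: "z [^] (int m) = \<one>" using zm[of 1] by simp
  have "generate G {x, y} \<subseteq> (\<lambda>(i,j,k). P i j k) ` ({0..<N} \<times> {0..<N} \<times> {0..<int m})"
  proof
    fix g assume "g \<in> generate G {x, y}"
    hence "g \<in> generate G {x [^] (1::int), y [^] (1::int)}" using xc yc by simp
    then obtain i j k where "g = P (1*i) (1*j) (1*1*k)" using Kab by blast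
    hence "g = P (i mod N) (j mod N) (k mod int m)" using P_mod[OF xo[folded N_def] yo[folded N_def] zo] by simp
    moreover have "(i mod N, j mod N, k mod int m) \<in> {0..<N} \<times> {0..<N} \<times> {0..<int m}"
      using Npos m by simp
    ultimately show "g \<in> (\<lambda>(i,j,k). P i j k) ` ({0..<N} \<times> {0..<N} \<times> {0..<int m})" by force
  qed
  thus ?thesis by (rule finite_subset) auto
qed


lemma pair_finite:
  assumes hyp: "\<forall>H. subgroup H G \<and> \<not> comm_group (G\<lparr>carrier := H\<rparr>) \<longrightarrow> centralizer G H \<subseteq> H"
    and znt: "z \<noteq> \<one>"
  shows "finite (generate G {x, y})"
proof (cases "\<exists>m::nat. m > 0 \<and> z [^] m = \<one>")
  case True
  then obtain m where "m > 0" "z [^] (m::nat) = \<one>" by blast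
  then show ?thesis using caseB[OF hyp znt] by blast
next
  case False
  then show ?thesis using caseA[OF hyp] by blast
qed

end

context group begin

lemma conj_same_comm:
  assumes c: "t \<in> carrier G" "s \<in> carrier G" "a \<in> carrier G"
    and e: "inv t \<otimes> a \<otimes> t = inv s \<otimes> a \<otimes> s"
  shows "(t \<otimes> inv s) \<otimes> a = a \<otimes> (t \<otimes> inv s)"
proof -
  define c where "c = inv s \<otimes> a \<otimes> s"
  have cc: "c \<in> carrier G" using c c_def by simp
  have 1: "a \<otimes> t = t \<otimes> c" using conj_eq_iff[of t a c] e c cc c_def by simp
  have 2: "a \<otimes> s = s \<otimes> c" using conj_eq_iff[of s a c] c cc c_def by simp
  have 3: "inv s \<otimes> a = c \<otimes> inv s"
  proof -
    have "inv s \<otimes> a = inv s \<otimes> (a \<otimes> s) \<otimes> inv s" using c by (simp add: m_assoc)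
    also have "\<dots> = c \<otimes> inv s" unfolding 2 using c cc by (simp add: m_assoc[symmetric])
    finally show ?thesis .
  qed
  have "(t \<otimes> inv s) \<otimes> a = t \<otimes> (c \<otimes> inv s)" using 3 c by (simp add: m_assoc)
  also have "\<dots> = (a \<otimes> t) \<otimes> inv s" unfolding 1 using c cc by (simp add: m_assoc)
  finally show ?thesis using c by (simp add: m_assoc)
qed

lemma finite_orbit:
  assumes S: "S \<subseteq> carrier G" and ab: "a \<in> carrier G" "b \<in> carrier G" and F: "finite F"
    and Fc: "\<And>g. g \<in> carrier G \<Longrightarrow> g \<otimes> a = a \<otimes> g \<Longrightarrow> g \<otimes> b = b \<otimes> g \<Longrightarrow> g \<in> F"
    and AB: "finite A" "finite B"
    and tA: "\<And>t. t \<in> S \<Longrightarrow> inv t \<otimes> a \<otimes> t \<in> A"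
    and tB: "\<And>t. t \<in> S \<Longrightarrow> inv t \<otimes> b \<otimes> t \<in> B"
  shows "finite S"
proof -
  define f where "f t = (inv t \<otimes> a \<otimes> t, inv t \<otimes> b \<otimes> t)" for t
  have "S \<subseteq> (\<Union>p\<in>A \<times> B. {t \<in> S. f t = p})" using tA tB f_def by auto
  moreover have "finite {t \<in> S. f t = p}" for p
  proof (cases "{t \<in> S. f t = p} = {}")
    case True then show ?thesis by (simp only: True finite.emptyI)
  next
    case False
    then obtain s where s: "s \<in> S" "f s = p" by auto
    have "{t \<in> S. f t = p} \<subseteq> (\<lambda>w. w \<otimes> s) ` F"
    proof
      fix t assume t: "t \<in> {t \<in> S. f t = p}"
      hence tc: "t \<in> carrier G" and sc: "s \<in> carrier G" using S s by auto
      from t s have "f t = f s" by simp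
      hence ea: "inv t \<otimes> a \<otimes> t = inv s \<otimes> a \<otimes> s" and eb: "inv t \<otimes> b \<otimes> t = inv s \<otimes> b \<otimes> s"
        unfolding f_def by auto
      have "t \<otimes> inv s \<in> F"
        using Fc conj_same_comm[OF tc sc ab(1) ea] conj_same_comm[OF tc sc ab(2) eb] tc sc by simp
      moreover have "t = (t \<otimes> inv s) \<otimes> s" using tc sc by (simp add: m_assoc)
      ultimately show "t \<in> (\<lambda>w. w \<otimes> s) ` F" by blast
    qed
    then show ?thesis using F finite_subset by blast
  qed
  ultimately show ?thesis using AB by (meson finite_SigmaI finite_UN_I finite_subset)
qed


end



context group begin

lemma commutator_closed: "a \<in> carrier G \<Longrightarrow> b \<in> carrier G \<Longrightarrow> commutator G a b \<in> carrier G"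
  unfolding commutator_def by simp

lemma comm_one_iff:
  assumes "a \<in> carrier G" "b \<in> carrier G"
  shows "commutator G a b = \<one> \<longleftrightarrow> a \<otimes> b = b \<otimes> a"
proof -
  have "commutator G a b = inv (b \<otimes> a) \<otimes> (a \<otimes> b)"
    unfolding commutator_def using assms by (simp add: inv_mult_group m_assoc)
  moreover have "inv (b \<otimes> a) \<otimes> (a \<otimes> b) = \<one> \<longleftrightarrow> a \<otimes> b = b \<otimes> a"
    using inv_solve_left[of "\<one>" "b \<otimes> a" "a \<otimes> b"] assms by auto
  ultimately show ?thesis by simp
qed

lemma comm_consistent:
  assumes "subgroup N G" "a \<in> N" "b \<in> N"
  shows "commutator (G\<lparr>carrier := N\<rparr>) a b = commutator G a b"
  unfolding commutator_def using assms by simp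

lemma lc_sub_N:
  assumes "N \<lhd> G"
  shows "lower_central (G\<lparr>carrier := N\<rparr>) k \<subseteq> N"
proof (induction k)
  case 0 then show ?case by simp
next
  case (Suc k)
  have sg: "subgroup N G" using assms normal_imp_subgroup by blast
  have gN: "group (G\<lparr>carrier := N\<rparr>)" using subgroup_imp_group[OF sg] .
  have "{commutator (G\<lparr>carrier := N\<rparr>) x y | x y. x \<in> lower_central (G\<lparr>carrier := N\<rparr>) k \<and> y \<in> carrier (G\<lparr>carrier := N\<rparr>)}
        \<subseteq> carrier (G\<lparr>carrier := N\<rparr>)"
    using Suc group.commutator_closed[OF gN] by auto
  then show ?case using group.generate_incl[OF gN] by simp
qed

lemma lc_ucs:
  assumes N: "N \<lhd> G" and n: "lower_central (G\<lparr>carrier := N\<rparr>) n = {\<one>}"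
  shows "i \<le> n \<Longrightarrow> lower_central (G\<lparr>carrier := N\<rparr>) (n - i) \<subseteq> ucs G N i"
proof (induction i)
  case 0 then show ?case using n by simp
next
  case (Suc i)
  have sg: "subgroup N G" using N normal_imp_subgroup by blast
  define k where "k = n - Suc i"
  have nk: "n - i = Suc k" using Suc.prems k_def by simp
  have IH: "lower_central (G\<lparr>carrier := N\<rparr>) (Suc k) \<subseteq> ucs G N i" using Suc nk by simp
  show ?case unfolding k_def[symmetric]
  proof
    fix t assume t: "t \<in> lower_central (G\<lparr>carrier := N\<rparr>) k"
    have tN: "t \<in> N" using lc_sub_N[OF N] t by blast
    have "commutator G t b \<in> ucs G N i" if b: "b \<in> N" for b
    proof -
      have "commutator (G\<lparr>carrier := N\<rparr>) t b \<in> lower_central (G\<lparr>carrier := N\<rparr>) (Suc k)"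
        using t b by (auto intro: generate.incl)
      thus ?thesis using comm_consistent[OF sg tN b] IH by auto
    qed
    thus "t \<in> ucs G N (Suc i)" using tN by simp
  qed
qed

lemma ucs_sub: assumes "N \<lhd> G" shows "ucs G N j \<subseteq> N"
proof (cases j)
  case 0
  have "\<one> \<in> N" using subgroup.one_closed[OF normal_imp_subgroup[OF assms]] .
  then show ?thesis using 0 by simp
next
  case (Suc k) then show ?thesis by auto
qed

lemma ucs_finite:
  assumes N: "N \<lhd> G" and xy: "x \<in> N" "y \<in> N" and F: "finite F"
    and Fc: "\<And>g. g \<in> carrier G \<Longrightarrow> g \<otimes> x = x \<otimes> g \<Longrightarrow> g \<otimes> y = y \<otimes> g \<Longrightarrow> g \<in> F"
  shows "finite (ucs G N j)"
proof (induction j)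
  case 0 then show ?case by simp
next
  case (Suc j)
  have sg: "subgroup N G" using N normal_imp_subgroup by blast
  have Nc: "N \<subseteq> carrier G" using subgroup.subset[OF sg] .
  have xc: "x \<in> carrier G" "y \<in> carrier G" using xy Nc by auto
  have conj: "inv t \<otimes> a \<otimes> t \<in> (\<lambda>w. w \<otimes> a) ` ucs G N j" if t: "t \<in> ucs G N (Suc j)" and a: "a \<in> N" for t a
  proof -
    have tN: "t \<in> N" and tc: "t \<in> carrier G" using t Nc by auto
    have ac: "a \<in> carrier G" using a Nc by auto
    have "inv a \<in> N" using subgroup.m_inv_closed[OF sg a] by simp
    hence "commutator G t (inv a) \<in> ucs G N j" using t by simp
    moreover have "inv t \<otimes> a \<otimes> t = commutator G t (inv a) \<otimes> a"
      unfolding commutator_def using tc ac by (simp add: m_assoc)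
    ultimately show ?thesis by blast
  qed
  show ?case
  proof (rule finite_orbit[OF _ xc F Fc])
    show "ucs G N (Suc j) \<subseteq> carrier G" using ucs_sub[OF N] Nc by blast
    show "finite ((\<lambda>w. w \<otimes> x) ` ucs G N j)" "finite ((\<lambda>w. w \<otimes> y) ` ucs G N j)" using Suc by auto
    show "inv t \<otimes> x \<otimes> t \<in> (\<lambda>w. w \<otimes> x) ` ucs G N j" if "t \<in> ucs G N (Suc j)" for t
      using conj[OF that xy(1)] .
    show "inv t \<otimes> y \<otimes> t \<in> (\<lambda>w. w \<otimes> y) ` ucs G N j" if "t \<in> ucs G N (Suc j)" for t
      using conj[OF that xy(2)] .
  qed
qed

lemma fin_G:
  assumes N1: "N1 \<lhd> G" "finite N1" and N2: "N2 \<lhd> G" "finite N2"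
    and xy: "x \<in> N1" "y \<in> N2" and F: "finite F"
    and Fc: "\<And>g. g \<in> carrier G \<Longrightarrow> g \<otimes> x = x \<otimes> g \<Longrightarrow> g \<otimes> y = y \<otimes> g \<Longrightarrow> g \<in> F"
  shows "finite (carrier G)"
proof (rule finite_orbit[OF _ _ _ F Fc N1(2) N2(2)])
  show "x \<in> carrier G" using subgroup.mem_carrier[OF normal_imp_subgroup[OF N1(1)] xy(1)] .
  show "y \<in> carrier G" using subgroup.mem_carrier[OF normal_imp_subgroup[OF N2(1)] xy(2)] .
  show "inv t \<otimes> x \<otimes> t \<in> N1" if "t \<in> carrier G" for t
    using normal.inv_op_closed1[OF N1(1) that xy(1)] .
  show "inv t \<otimes> y \<otimes> t \<in> N2" if "t \<in> carrier G" for t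
    using normal.inv_op_closed1[OF N2(1) that xy(2)] .
qed simp


lemma c2_of:
  assumes "x \<in> carrier G" "y \<in> carrier G" "commutator G x y \<otimes> x = x \<otimes> commutator G x y"
    "commutator G x y \<otimes> y = y \<otimes> commutator G x y"
  shows "c2 G x y (commutator G x y)"
proof (unfold_locales)
  show "x \<in> carrier G" "y \<in> carrier G" by fact+
  show "commutator G x y \<in> carrier G" using assms commutator_closed by simp
  show "x \<otimes> y = y \<otimes> x \<otimes> commutator G x y"
    unfolding commutator_def using assms(1,2) by (simp add: m_assoc cancel_l1)
  show "commutator G x y \<otimes> x = x \<otimes> commutator G x y" "commutator G x y \<otimes> y = y \<otimes> commutator G x y"
    by fact+
qed

lemma nil_fin:
  assumes hyp: "\<forall>H. subgroup H G \<and> \<not> comm_group (G\<lparr>carrier := H\<rparr>) \<longrightarrow> centralizer G H \<subseteq> H"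
    and N: "N \<lhd> G" and nil: "nilpotent_group (G\<lparr>carrier := N\<rparr>)"
    and uv: "u \<in> N" "v \<in> N" "u \<otimes> v \<noteq> v \<otimes> u"
  shows "finite (carrier G)"
proof -
  have sg: "subgroup N G" using N normal_imp_subgroup by blast
  have Nc: "N \<subseteq> carrier G" using subgroup.subset[OF sg] .
  obtain n where n: "lower_central (G\<lparr>carrier := N\<rparr>) n = {\<one>\<^bsub>G\<lparr>carrier := N\<rparr>\<^esub>}"
    using nil unfolding nilpotent_group_def by blast
  hence n': "lower_central (G\<lparr>carrier := N\<rparr>) n = {\<one>}" by simp
  have Nsub: "N \<subseteq> ucs G N n" using lc_ucs[OF N n', of n] by simp
  have "\<not> ucs G N (Suc (Suc 0)) \<subseteq> ucs G N (Suc 0)"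
  proof
    assume h: "ucs G N (Suc (Suc 0)) \<subseteq> ucs G N (Suc 0)"
    have all: "ucs G N j \<subseteq> ucs G N (Suc 0)" for j
    proof (induction j)
      case 0
      have "\<one> \<in> N" using subgroup.one_closed[OF sg] .
      moreover have "commutator G \<one> b = \<one>" if "b \<in> N" for b
        unfolding commutator_def using that Nc by auto
      ultimately show ?case by simp
    next
      case (Suc j)
      show ?case
      proof
        fix t assume "t \<in> ucs G N (Suc j)"
        hence "t \<in> ucs G N (Suc (Suc 0))" using Suc.IH by auto
        thus "t \<in> ucs G N (Suc 0)" using h by blast
      qed
    qed
    have "u \<in> ucs G N (Suc 0)" using all[of n] Nsub uv by blast
    hence "commutator G u v = \<one>" using uv by simp
    moreover have "u \<in> carrier G" "v \<in> carrier G" using uv Nc by auto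
    ultimately show False using comm_one_iff[of u v] uv by simp
  qed
  then obtain x where x: "x \<in> ucs G N (Suc (Suc 0))" "x \<notin> ucs G N (Suc 0)" by blast
  have xN: "x \<in> N" using x by simp
  then obtain y where yN: "y \<in> N" and zn: "commutator G x y \<noteq> \<one>" using x by auto
  define z where "z = commutator G x y"
  have z1: "z \<in> ucs G N (Suc 0)" using x yN z_def by simp
  have zN: "z \<in> N" using z1 by simp
  have zcomm: "z \<otimes> b = b \<otimes> z" if "b \<in> N" for b
  proof -
    have "commutator G z b = \<one>" using z1 that by simp
    moreover have "z \<in> carrier G" "b \<in> carrier G" using zN that Nc by auto
    ultimately show ?thesis using comm_one_iff[of z b] by simp
  qed
  have xc: "x \<in> carrier G" "y \<in> carrier G" using xN yN Nc by auto
  interpret c: c2 G x y z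
    using c2_of[OF xc] zcomm[OF xN] zcomm[OF yN] unfolding z_def by simp
  have Ffin: "finite (generate G {x, y})" using c.pair_finite[OF hyp] zn z_def by simp
  have Fc: "g \<in> generate G {x, y}" if "g \<in> carrier G" "g \<otimes> x = x \<otimes> g" "g \<otimes> y = y \<otimes> g" for g
    using c.pair_cent[OF hyp _ that] zn z_def by simp
  have "finite N" using ucs_finite[OF N xN yN Ffin Fc, of n] Nsub finite_subset by blast
  show ?thesis by (rule fin_G[OF N \<open>finite N\<close> N \<open>finite N\<close> xN yN Ffin Fc])
qed

lemma ab_fin:
  assumes hyp: "\<forall>H. subgroup H G \<and> \<not> comm_group (G\<lparr>carrier := H\<rparr>) \<longrightarrow> centralizer G H \<subseteq> H"
    and N1: "N1 \<lhd> G" and N2: "N2 \<lhd> G"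
    and ab1: "\<And>u v. u \<in> N1 \<Longrightarrow> v \<in> N1 \<Longrightarrow> u \<otimes> v = v \<otimes> u"
    and ab2: "\<And>u v. u \<in> N2 \<Longrightarrow> v \<in> N2 \<Longrightarrow> u \<otimes> v = v \<otimes> u"
    and ab: "a \<in> N1" "b \<in> N2" "a \<otimes> b \<noteq> b \<otimes> a"
  shows "finite (carrier G)"
proof -
  have sg1: "subgroup N1 G" and sg2: "subgroup N2 G" using N1 N2 normal_imp_subgroup by blast+
  have Nc: "N1 \<subseteq> carrier G" "N2 \<subseteq> carrier G" using subgroup.subset[OF sg1] subgroup.subset[OF sg2] by auto
  have ac: "a \<in> carrier G" "b \<in> carrier G" using ab Nc by auto
  have inter: "commutator G p q \<in> N1 \<inter> N2" if p: "p \<in> N1" "p \<in> carrier G" and q: "q \<in> N2" "q \<in> carrier G" for p q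
  proof -
    have "inv q \<otimes> p \<otimes> q \<in> N1" using normal.inv_op_closed1[OF N1 q(2) p(1)] .
    moreover have "inv p \<in> N1" using subgroup.m_inv_closed[OF sg1 p(1)] .
    ultimately have 1: "inv p \<otimes> (inv q \<otimes> p \<otimes> q) \<in> N1" using subgroup.m_closed[OF sg1] by blast
    have "inv p \<otimes> inv q \<otimes> p \<in> N2" using normal.inv_op_closed1[OF N2 p(2) subgroup.m_inv_closed[OF sg2 q(1)]] .
    hence 2: "inv p \<otimes> inv q \<otimes> p \<otimes> q \<in> N2" using subgroup.m_closed[OF sg2] q by blast
    show ?thesis using 1 2 unfolding commutator_def using p q by (simp add: m_assoc)
  qed
  have inter': "commutator G q p \<in> N1 \<inter> N2" if p: "p \<in> N1" "p \<in> carrier G" and q: "q \<in> N2" "q \<in> carrier G" for p q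
  proof -
    have "inv p \<otimes> q \<otimes> p \<in> N2" using normal.inv_op_closed1[OF N2 p(2) q(1)] .
    moreover have "inv q \<in> N2" using subgroup.m_inv_closed[OF sg2 q(1)] .
    ultimately have 1: "inv q \<otimes> (inv p \<otimes> q \<otimes> p) \<in> N2" using subgroup.m_closed[OF sg2] by blast
    have "inv q \<otimes> inv p \<otimes> q \<in> N1" using normal.inv_op_closed1[OF N1 q(2) subgroup.m_inv_closed[OF sg1 p(1)]] .
    hence 2: "inv q \<otimes> inv p \<otimes> q \<otimes> p \<in> N1" using subgroup.m_closed[OF sg1] p by blast
    show ?thesis using 1 2 unfolding commutator_def using p q by (simp add: m_assoc)
  qed
  define z where "z = commutator G a b"
  have zI: "z \<in> N1 \<inter> N2" using inter[OF ab(1) ac(1) ab(2) ac(2)] z_def by simp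
  have zx: "z \<otimes> a = a \<otimes> z" using ab1[of z a] zI ab by simp
  have zy: "z \<otimes> b = b \<otimes> z" using ab2[of z b] zI ab by simp
  have zn: "z \<noteq> \<one>" using comm_one_iff[OF ac] ab z_def by simp
  interpret c: c2 G a b z
    using c2_of[OF ac] zx zy unfolding z_def by simp
  have Ffin: "finite (generate G {a, b})" using c.pair_finite[OF hyp zn] .
  have Fc: "g \<in> generate G {a, b}" if "g \<in> carrier G" "g \<otimes> a = a \<otimes> g" "g \<otimes> b = b \<otimes> g" for g
    using c.pair_cent[OF hyp zn that] .
  have IF: "N1 \<inter> N2 \<subseteq> generate G {a, b}"
  proof
    fix w assume w: "w \<in> N1 \<inter> N2"
    show "w \<in> generate G {a, b}" using Fc[of w] w ab1[of w a] ab2[of w b] ab Nc by auto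
  qed
  have IFf: "finite (N1 \<inter> N2)" using IF Ffin finite_subset by blast
  have fin1: "finite N1"
  proof (rule finite_orbit[OF Nc(1) ac Ffin Fc, of "{a}" "(\<lambda>w. b \<otimes> w) ` (N1 \<inter> N2)"])
    show "finite {a}" "finite ((\<lambda>w. b \<otimes> w) ` (N1 \<inter> N2))" using IFf by auto
    fix t assume t: "t \<in> N1"
    have tc: "t \<in> carrier G" using t Nc by auto
    have "a \<otimes> t = t \<otimes> a" using ab1[OF ab(1) t] .
    thus "inv t \<otimes> a \<otimes> t \<in> {a}" using conj_eq_iff[OF tc ac(1) ac(1)] by simp
    have "inv t \<otimes> b \<otimes> t = b \<otimes> commutator G b t"
      unfolding commutator_def using tc ac by (simp add: m_assoc cancel_l1)
    thus "inv t \<otimes> b \<otimes> t \<in> (\<lambda>w. b \<otimes> w) ` (N1 \<inter> N2)" using inter'[OF t tc ab(2) ac(2)] by blast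
  qed
  have fin2: "finite N2"
  proof (rule finite_orbit[OF Nc(2) ac Ffin Fc, of "(\<lambda>w. a \<otimes> w) ` (N1 \<inter> N2)" "{b}"])
    show "finite {b}" "finite ((\<lambda>w. a \<otimes> w) ` (N1 \<inter> N2))" using IFf by auto
    fix t assume t: "t \<in> N2"
    have tc: "t \<in> carrier G" using t Nc by auto
    have "b \<otimes> t = t \<otimes> b" using ab2[OF ab(2) t] .
    thus "inv t \<otimes> b \<otimes> t \<in> {b}" using conj_eq_iff[OF tc ac(2) ac(2)] by simp
    have "inv t \<otimes> a \<otimes> t = a \<otimes> commutator G a t"
      unfolding commutator_def using tc ac by (simp add: m_assoc cancel_l1)
    thus "inv t \<otimes> a \<otimes> t \<in> (\<lambda>w. a \<otimes> w) ` (N1 \<inter> N2)" using inter[OF ab(1) ac(1) t tc] by blast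
  qed
  show ?thesis using fin_G[OF N1 fin1 N2 fin2 ab(1,2) Ffin Fc] .
qed

end

theorem theorem5p1:
  fixes G (structure)
  assumes "group G"
    and "infinite (carrier G)"
    and "\<forall>H. subgroup H G \<and> \<not> comm_group (G\<lparr>carrier := H\<rparr>) \<longrightarrow> centralizer G H \<subseteq> H"
  shows "comm_group (G\<lparr>carrier := fitting_subgroup G\<rparr>)"
proof -
  interpret group G by fact
  define U where "U = \<Union>{N. N \<lhd> G \<and> nilpotent_group (G\<lparr>carrier := N\<rparr>)}"
  have Uc: "U \<subseteq> carrier G"
  proof
    fix a assume "a \<in> U"
    then obtain N where N: "N \<lhd> G" "a \<in> N" unfolding U_def by blast
    show "a \<in> carrier G" using subgroup.mem_carrier[OF normal_imp_subgroup[OF N(1)] N(2)] .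
  qed
  have Ucomm: "a \<otimes> b = b \<otimes> a" if a: "a \<in> U" and b: "b \<in> U" for a b
  proof (rule ccontr)
    assume nc: "a \<otimes> b \<noteq> b \<otimes> a"
    obtain N1 where N1: "N1 \<lhd> G" "nilpotent_group (G\<lparr>carrier := N1\<rparr>)" "a \<in> N1" using a unfolding U_def by blast
    obtain N2 where N2: "N2 \<lhd> G" "nilpotent_group (G\<lparr>carrier := N2\<rparr>)" "b \<in> N2" using b unfolding U_def by blast
    have "finite (carrier G)"
    proof (cases "\<exists>u\<in>N1. \<exists>v\<in>N1. u \<otimes> v \<noteq> v \<otimes> u")
      case True
      then obtain u v where uv: "u \<in> N1" "v \<in> N1" "u \<otimes> v \<noteq> v \<otimes> u" by blast
      show ?thesis using nil_fin[OF assms(3) N1(1,2) uv] .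
    next
      case False
      show ?thesis
      proof (cases "\<exists>u\<in>N2. \<exists>v\<in>N2. u \<otimes> v \<noteq> v \<otimes> u")
        case True
        then obtain u v where uv: "u \<in> N2" "v \<in> N2" "u \<otimes> v \<noteq> v \<otimes> u" by blast
        show ?thesis using nil_fin[OF assms(3) N2(1,2) uv] .
      next
        case False2: False
        have ab1: "\<And>u v. u \<in> N1 \<Longrightarrow> v \<in> N1 \<Longrightarrow> u \<otimes> v = v \<otimes> u" using False by blast
        have ab2: "\<And>u v. u \<in> N2 \<Longrightarrow> v \<in> N2 \<Longrightarrow> u \<otimes> v = v \<otimes> u" using False2 by blast
        show ?thesis using ab_fin[OF assms(3) N1(1) N2(1) ab1 ab2 N1(3) N2(3) nc] .
      qed
    qed
    thus False using assms(2) by simp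
  qed
  have F: "fitting_subgroup G = generate G U" unfolding fitting_subgroup_def U_def ..
  have sg: "subgroup (generate G U) G" using generate_is_subgroup[OF Uc] .
  have Fcomm: "a \<otimes> b = b \<otimes> a" if a: "a \<in> generate G U" and b: "b \<in> generate G U" for a b
  proof -
    have ac: "a \<in> carrier G" using subgroup.mem_carrier[OF sg a] .
    have "u \<otimes> a = a \<otimes> u" if u: "u \<in> U" for u
    proof -
      have uc: "u \<in> carrier G" using u Uc by blast
      have "a \<otimes> u = u \<otimes> a" by (rule generate_comm[OF Uc uc _ a]) (rule Ucomm[OF _ u])
      thus ?thesis by simp
    qed
    hence "b \<otimes> a = a \<otimes> b" by (intro generate_comm[OF Uc ac _ b]) blast
    thus ?thesis by simp
  qed
  have "group (G\<lparr>carrier := generate G U\<rparr>)" using subgroup_imp_group[OF sg] .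
  then have "comm_group (G\<lparr>carrier := generate G U\<rparr>)"
    by (rule group.group_comm_groupI) (use Fcomm in simp)
  thus ?thesis unfolding F .
qed

end
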